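(* Let $\Gamma\subset\mathbb{C}^n$ be a discrete subgroup with $\mathrm{rank}_{\mathbb{C}}\Gamma=n$, and let $X=\mathbb{C}^n/\Gamma$ have a period matrix of the form $$P=\begin{pmatrix}0 & I_m & T\\ I_{n-m} & R_1 & R_2\end{pmatrix},\qquad \det(\mathrm{Im}(T))\neq 0,$$ with $R_1,R_2$ real matrices. Suppose that the real $(n-m,2m)$-matrix $(R_1\ R_2)$ does not satisfy the irrationality condition, so that $X$ has the Remmert–Morimoto decomposition $X\cong(\mathbb{C}^* )^q\times Y$ with $q\ge 1$ and $Y=\mathbb{C}^r/\Lambda$ a toroidal group. Let $\mathbb{T}:=\mathbb{C}^m_\Gamma/\Lambda_{\mathbb{T}}$, where $\Lambda_{\mathbb{T}}$ is the lattice generated by the columns of $(I_m\ T)$. If $\mathbb{T}$ is an abelian variety, then $Y$ is a quasi-abelian variety of kind $0$.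
   Context: $\mathrm{rank}_{\mathbb{C}}\Gamma$ is the complex dimension of the complex linear span of $\Gamma$. $\mathbb{R}^{n+m}_\Gamma$ denotes the real linear span of $\Gamma$, and $\mathbb{C}^m_\Gamma=\mathbb{R}^{n+m}_\Gamma\cap\sqrt{-1}\,\mathbb{R}^{n+m}_\Gamma$ is the maximal complex linear subspace contained in it (here, in the coordinates of the period matrix, the span of the last $m$ coordinate directions paired with $(I_m\ T)$). A toroidal group is a connected commutative complex Lie group $\mathbb{C}^r/\Lambda$ on which every holomorphic function is constant; $\mathbb{C}^n/\Gamma$ with the period matrix above is toroidal iff $(R_1\ R_2)$ satisfies the irrationality condition. For a toroidal group $Y=\mathbb{C}^r/\Lambda$ with $\mathrm{rank}\,\Lambda=r+m$, an ample Riemann form is a hermitian form $\mathcal{H}$ on $\mathbb{C}^r$ which is positive definite on the maximal complex subspace $\mathbb{C}^m_\Lambda$ of the real span $\mathbb{R}^{r+m}_\Lambda$ of $\Lambda$ and whose imaginary part is $\mathbb{Z}$-valued on $\Lambda\times\Lambda$; it is of kind $k$ if the restriction of $\mathrm{Im}\,\mathcal{H}$ to $\mathbb{R}^{r+m}_\Lambda\times\mathbb{R}^{r+m}_\Lambda$ has rank $2(m+k)$. $Y$ is a quasi-abelian variety of kind $0$ if it admits an ample Riemann form of kind $0$. *)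

theory Defs
  imports "HOL-Analysis.Analysis"
begin

definition clinear_vec :: "(complex^'a \<Rightarrow> complex^'b) \<Rightarrow> bool" where
  "clinear_vec f \<longleftrightarrow> (\<forall>x y. f (x + y) = f x + f y) \<and> (\<forall>c x. f (c *s x) = c *s f x)"

definition holomorphic_vec :: "(complex^'r \<Rightarrow> complex) \<Rightarrow> bool" where
  "holomorphic_vec f \<longleftrightarrow>
     (\<forall>z. \<exists>L. (f has_derivative L) (at z) \<and> (\<forall>c v. L (c *s v) = c * L v))"

definition cspan_vec :: "(complex^'n) set \<Rightarrow> (complex^'n) set" where
  "cspan_vec S = {(\<Sum>v\<in>F. c v *s v) | F c. finite F \<and> F \<subseteq> S}"

definition discrete_subgroup :: "(complex^'n) set \<Rightarrow> bool" where
  "discrete_subgroup G \<longleftrightarrow> 0 \<in> G \<and> (\<forall>x\<in>G. \<forall>y\<in>G. x - y \<in> G) \<and>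
     (\<exists>e>0. \<forall>g\<in>G. g \<noteq> 0 \<longrightarrow> e \<le> norm g)"

text \<open>Toroidal group C^r / L: every holomorphic function on the quotient is constant,
  i.e. every L-periodic holomorphic function on C^r is constant.\<close>
definition toroidal :: "(complex^'r) set \<Rightarrow> bool" where
  "toroidal L \<longleftrightarrow> (\<forall>f. holomorphic_vec f \<and> (\<forall>z. \<forall>l\<in>L. f (z + l) = f z)
        \<longrightarrow> (\<exists>c. \<forall>z. f z = c))"

definition hermitian_form :: "(complex^'r \<Rightarrow> complex^'r \<Rightarrow> complex) \<Rightarrow> bool" where
  "hermitian_form H \<longleftrightarrow>
     (\<forall>u v w. H (u + v) w = H u w + H v w) \<and>
     (\<forall>c v w. H (c *s v) w = c * H v w) \<and>
     (\<forall>v w. H v w = cnj (H w v))"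

definition max_complex_subspace :: "(complex^'r) set \<Rightarrow> (complex^'r) set" where
  "max_complex_subspace L = span L \<inter> (\<lambda>v. \<i> *s v) ` span L"

definition im_rank_on :: "(complex^'r \<Rightarrow> complex^'r \<Rightarrow> complex) \<Rightarrow> (complex^'r) set \<Rightarrow> nat" where
  "im_rank_on H L = dim (span L) - dim {v \<in> span L. \<forall>w\<in>span L. Im (H v w) = 0}"

text \<open>Ample Riemann form of kind k for the toroidal group C^r/L
  (rank of Im H on R_L equals 2(m+k) where 2m = real dim of C^m_L).\<close>
definition ample_riemann_form_kind ::
  "(complex^'r \<Rightarrow> complex^'r \<Rightarrow> complex) \<Rightarrow> (complex^'r) set \<Rightarrow> nat \<Rightarrow> bool" where
  "ample_riemann_form_kind H L k \<longleftrightarrow>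
     hermitian_form H \<and>
     (\<forall>v\<in>max_complex_subspace L. v \<noteq> 0 \<longrightarrow> Re (H v v) > 0) \<and>
     (\<forall>a\<in>L. \<forall>b\<in>L. Im (H a b) \<in> \<int>) \<and>
     im_rank_on H L = dim (max_complex_subspace L) + 2 * k"

definition quasi_abelian_kind0 :: "(complex^'r) set \<Rightarrow> bool" where
  "quasi_abelian_kind0 L \<longleftrightarrow> (\<exists>H. ample_riemann_form_kind H L 0)"

text \<open>Abelian variety C^m/L (L a lattice): admits a Riemann form, i.e. a positive definite
  hermitian form whose imaginary part is integral on L.\<close>
definition abelian_variety :: "(complex^'m) set \<Rightarrow> bool" where
  "abelian_variety L \<longleftrightarrow> (\<exists>H. hermitian_form H \<and> (\<forall>v. v \<noteq> 0 \<longrightarrow> Re (H v v) > 0) \<and>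
       (\<forall>a\<in>L. \<forall>b\<in>L. Im (H a b) \<in> \<int>))"

definition irrationality_condition :: "real^'c^'k \<Rightarrow> bool" where
  "irrationality_condition R \<longleftrightarrow>
     (\<forall>\<sigma>::int^'k. \<sigma> \<noteq> 0 \<longrightarrow> (\<exists>j. (\<Sum>i\<in>UNIV. of_int (\<sigma>$i) * R$i$j) \<notin> \<int>))"

definition block_R :: "real^'m^'k \<Rightarrow> real^'m^'k \<Rightarrow> real^('m + 'm)^'k" where
  "block_R R1 R2 = (\<chi> i j. case j of Inl a \<Rightarrow> R1$i$a | Inr b \<Rightarrow> R2$i$b)"

text \<open>The lattice Gamma in C^n = C^('m + 'k) spanned (over Z) by the columns of
  P = ((0, I_m, T), (I_(n-m), R1, R2)); coordinates Inl a are the first m rows,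
  coordinates Inr i the last n-m rows.\<close>
definition period_lattice ::
  "complex^'m^'m \<Rightarrow> real^'m^'k \<Rightarrow> real^'m^'k \<Rightarrow> (complex^('m + 'k)) set" where
  "period_lattice T R1 R2 =
    {(\<Sum>j\<in>UNIV. of_int (a j) *s (\<chi> idx. case idx of Inl _ \<Rightarrow> 0 | Inr i \<Rightarrow> (if i = j then 1 else 0)))
     + (\<Sum>l\<in>UNIV. of_int (b l) *s (\<chi> idx. case idx of Inl p \<Rightarrow> (if p = l then 1 else 0)
                                                 | Inr i \<Rightarrow> complex_of_real (R1$i$l)))
     + (\<Sum>l\<in>UNIV. of_int (c l) *s (\<chi> idx. case idx of Inl p \<Rightarrow> T$p$l
                                                 | Inr i \<Rightarrow> complex_of_real (R2$i$l)))
     | (a :: 'k \<Rightarrow> int) (b :: 'm \<Rightarrow> int) (c :: 'm \<Rightarrow> int). True}"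

definition torus_lattice :: "complex^'m^'m \<Rightarrow> (complex^'m) set" where
  "torus_lattice T =
    {(\<Sum>l\<in>UNIV. of_int (b l) *s (\<chi> p. if p = l then 1 else 0))
     + (\<Sum>l\<in>UNIV. of_int (c l) *s (\<chi> p. T$p$l))
     | (b :: 'm \<Rightarrow> int) (c :: 'm \<Rightarrow> int). True}"

text \<open>Kernel lattice of (C^*)^q x C^r/L, viewed as C^(q+r) modulo
  (2 pi i Z)^q x L (C^* = C / 2 pi i Z via exp).\<close>
definition split_lattice :: "(complex^'r) set \<Rightarrow> (complex^('q::finite + 'r)) set" where
  "split_lattice L = {v. (\<forall>i. \<exists>z::int. v$(Inl i) = 2 * of_real pi * \<i> * of_int z)
                          \<and> (\<chi> j. v$(Inr j)) \<in> L}"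

text \<open>Isomorphism of connected commutative complex Lie groups C^n/G and C^N/G':
  a complex-linear isomorphism of the universal covers carrying G onto G'.\<close>
definition quotient_iso :: "(complex^'a) set \<Rightarrow> (complex^'b) set \<Rightarrow> bool" where
  "quotient_iso G G' \<longleftrightarrow> (\<exists>\<phi>. bij \<phi> \<and> clinear_vec \<phi> \<and> \<phi> ` G = G')"

end

theory Submission
  imports Defs
begin

lemma scaleR_cvec: "c *\<^sub>R (x :: complex^'n) = complex_of_real c *s x"
  by (subst vec_eq_iff, intro allI) (metis vector_scaleR_component vector_smult_component scaleR_conv_of_real)

lemma clinear_linear: "clinear_vec f \<Longrightarrow> linear f"
  unfolding clinear_vec_def
  by (intro linearI) (auto simp: scaleR_cvec)

lemma clinear_inv:
  assumes "bij f" "clinear_vec f" shows "clinear_vec (inv f)"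
proof -
  have inj: "inj f" using assms(1) bij_is_inj by blast
  have s: "f (inv f x) = x" for x using assms(1) by (simp add: bij_is_surj surj_f_inv_f)
  have a: "\<And>x y. f (x + y) = f x + f y" "\<And>c x. f (c *s x) = c *s f x"
    using assms(2) unfolding clinear_vec_def by auto
  show ?thesis unfolding clinear_vec_def
  proof (intro conjI allI)
    fix x y
    have "f (inv f x + inv f y) = x + y" by (simp add: a s)
    then show "inv f (x + y) = inv f x + inv f y" using inj by (metis inv_f_f)
  next
    fix c x
    have "f (c *s inv f x) = c *s x" by (simp add: a s)
    then show "inv f (c *s x) = c *s inv f x" using inj by (metis inv_f_f)
  qed
qed

lemma herm_props:
  assumes "hermitian_form H"
  shows "H (u + v) w = H u w + H v w" "H (c *s v) w = c * H v w"
    "H v (c *s w) = cnj c * H v w" "H 0 w = 0" "H (u - v) w = H u w - H v w"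
    "Im (H v (\<i> *s v)) = - Re (H v v)"
proof -
  have A: "\<And>u v w. H (u + v) w = H u w + H v w" "\<And>c v w. H (c *s v) w = c * H v w"
    "\<And>v w. H v w = cnj (H w v)" using assms unfolding hermitian_form_def by blast+
  show "H (u + v) w = H u w + H v w" "H (c *s v) w = c * H v w" using A by blast+
  have B: "H v (c *s w) = cnj c * H v w" for v c w
  proof -
    have "H v (c *s w) = cnj (c * H w v)" using A(2)[of c w v] A(3)[of v "c *s w"] by simp
    also have "\<dots> = cnj c * cnj (H w v)" by simp
    also have "cnj (H w v) = H v w" using A(3)[of v w] by simp
    finally show ?thesis .
  qed
  show "H v (c *s w) = cnj c * H v w" by (rule B)
  show Z: "H 0 w = 0" using A(2)[of 0 v w] by simp
  have "u - v = u + (-1) *s v" by (simp add: vec_eq_iff)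
  then show "H (u - v) w = H u w - H v w" using A(1)[of u "(-1) *s v" w] A(2)[of "-1" v w] by simp
  have "Im (H v v) = - Im (H v v)" using arg_cong[OF A(3)[of v v], of Im] by simp
  then have "Im (H v v) = 0" by simp
  then show "Im (H v (\<i> *s v)) = - Re (H v v)" using B[of v \<i> v] by (simp del: A)
qed

lemma span_Gamma_real:
  fixes T :: "complex^'m^'m" and R1 R2 :: "real^'m^'k"
  assumes "x \<in> span (period_lattice T R1 R2)"
  shows "Im (x $ Inr i) = 0"
proof -
  have sub: "subspace {x :: complex^('m+'k). \<forall>i. Im (x $ Inr i) = 0}"
    unfolding subspace_def by auto
  have "period_lattice T R1 R2 \<subseteq> {x. \<forall>i. Im (x $ Inr i) = 0}"
    unfolding period_lattice_def apply (auto simp: Im_sum) apply (rule sum.neutral) by auto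
  from span_minimal[OF this sub] assms show ?thesis by auto
qed

lemma Gamma_torus:
  assumes "z \<in> period_lattice T R1 R2"
  shows "(\<chi> l. z $ Inl l) \<in> torus_lattice T"
proof -
  obtain a b c where z: "z = (\<Sum>j\<in>UNIV. of_int (a j) *s (\<chi> idx. case idx of Inl _ \<Rightarrow> 0 | Inr i \<Rightarrow> (if i = j then 1 else 0)))
     + (\<Sum>l\<in>UNIV. of_int (b l) *s (\<chi> idx. case idx of Inl p \<Rightarrow> (if p = l then 1 else 0)
                                                 | Inr i \<Rightarrow> complex_of_real (R1$i$l)))
     + (\<Sum>l\<in>UNIV. of_int (c l) *s (\<chi> idx. case idx of Inl p \<Rightarrow> T$p$l
                                                 | Inr i \<Rightarrow> complex_of_real (R2$i$l)))"
    using assms unfolding period_lattice_def by blast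
  have "(\<chi> l. z $ Inl l) = (\<Sum>l\<in>UNIV. of_int (b l) *s (\<chi> p. if p = l then 1 else 0))
     + (\<Sum>l\<in>UNIV. of_int (c l) *s (\<chi> p. T$p$l))"
    unfolding z by (simp add: vec_eq_iff)
  then show ?thesis unfolding torus_lattice_def by blast
qed

lemma span_split:
  fixes \<Lambda> :: "(complex^'r) set"
  assumes "w \<in> span (split_lattice \<Lambda> :: (complex^('q::finite + 'r)) set)"
  shows "Re (w $ Inl j) = 0 \<and> (\<chi> j. w $ Inr j) \<in> span \<Lambda>"
proof -
  let ?S = "{w :: complex^('q+'r). (\<forall>j. Re (w $ Inl j) = 0) \<and> (\<chi> j. w $ Inr j) \<in> span \<Lambda>}"
  have e1: "(\<chi> j. (x + y) $ Inr j) = (\<chi> j. x $ Inr j) + (\<chi> j. y $ Inr j)" for x y :: "complex^('q+'r)"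
    by (simp add: vec_eq_iff)
  have e2: "(\<chi> j. (c *\<^sub>R x) $ Inr j) = c *\<^sub>R (\<chi> j. x $ Inr j)" for c and x :: "complex^('q+'r)"
    by (simp add: vec_eq_iff)
  have e0: "(\<chi> j. (0::complex^('q+'r)) $ Inr j) = 0" by (simp add: vec_eq_iff)
  have sub: "subspace ?S"
    unfolding subspace_def using e0 e1 e2 by (auto intro: span_add span_scale simp: span_zero)
  have re0: "Re (2 * complex_of_real pi * \<i> * complex_of_int z) = 0" for z by simp
  have "split_lattice \<Lambda> \<subseteq> ?S"
    unfolding split_lattice_def
  proof (intro subsetI CollectI conjI allI; elim CollectE conjE)
    fix x j assume "\<forall>i. \<exists>z. x $ Inl i = 2 * complex_of_real pi * \<i> * complex_of_int z"
    then obtain z where "x $ Inl j = 2 * complex_of_real pi * \<i> * complex_of_int z" by blast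
    then show "Re (x $ Inl j) = 0" using re0 by simp
  next
    fix x assume "(\<chi> j. x $ Inr j) \<in> \<Lambda>" then show "(\<chi> j. x $ Inr j) \<in> span \<Lambda>" by (rule span_base)
  qed
  from span_minimal[OF this sub] assms show ?thesis by auto
qed

lemma span_Gamma_full:
  fixes T :: "complex^'m^'m" and R1 R2 :: "real^'m^'k" and x :: "complex^('m+'k)"
  assumes imT: "det (\<chi> i j. Im (T$i$j)) \<noteq> 0" and z0: "\<forall>i. x $ Inr i = 0"
  shows "x \<in> span (period_lattice T R1 R2)"
proof -
  define A :: "real^'m^'m" where "A = (\<chi> i j. Im (T$i$j))"
  have "invertible A" using imT invertible_det_nz unfolding A_def by blast
  then have "surj (\<lambda>v. A *v v)" using invertible_right_inverse matrix_right_invertible_surjective by blast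
  then obtain \<gamma> where A\<gamma>: "A *v \<gamma> = (\<chi> p. Im (x $ Inl p))" by (metis surjD)
  define \<beta> where "\<beta> = (\<chi> p. Re (x $ Inl p) - (\<Sum>l\<in>UNIV. \<gamma>$l * Re (T$p$l)))"
  define \<alpha> where "\<alpha> = (\<chi> i. - ((\<Sum>l\<in>UNIV. \<beta>$l * R1$i$l) + (\<Sum>l\<in>UNIV. \<gamma>$l * R2$i$l)))"
  define E :: "'k \<Rightarrow> complex^('m+'k)" where "E j = (\<chi> idx. case idx of Inl _ \<Rightarrow> 0 | Inr i \<Rightarrow> (if i = j then 1 else 0))" for j
  define B :: "'m \<Rightarrow> complex^('m+'k)" where "B l = (\<chi> idx. case idx of Inl p \<Rightarrow> (if p = l then 1 else 0)
                                                 | Inr i \<Rightarrow> complex_of_real (R1$i$l))" for l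
  define C :: "'m \<Rightarrow> complex^('m+'k)" where "C l = (\<chi> idx. case idx of Inl p \<Rightarrow> T$p$l
                                                 | Inr i \<Rightarrow> complex_of_real (R2$i$l))" for l
  have memG: "(\<Sum>j\<in>UNIV. of_int (a j) *s E j) + (\<Sum>l\<in>UNIV. of_int (b l) *s B l) + (\<Sum>l\<in>UNIV. of_int (c l) *s C l)
      \<in> period_lattice T R1 R2" for a b c
    unfolding period_lattice_def E_def B_def C_def by blast
  have sel: "(of_int (if P then 1 else 0) :: complex) *s v = (if P then v else 0)" for P and v :: "complex^('m+'k)"
    by simp
  have EG: "E j \<in> period_lattice T R1 R2" for j
  proof -
    have "E j = (\<Sum>j'\<in>UNIV. of_int (if j' = j then 1 else 0) *s E j') + (\<Sum>l\<in>UNIV. of_int 0 *s B l) + (\<Sum>l\<in>UNIV. of_int 0 *s C l)"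
      by (simp only: sel) simp
    then show ?thesis by (rule ssubst) (rule memG)
  qed
  have BG: "B j \<in> period_lattice T R1 R2" for j
  proof -
    have "B j = (\<Sum>j'\<in>UNIV. of_int 0 *s E j') + (\<Sum>l\<in>UNIV. of_int (if l = j then 1 else 0) *s B l) + (\<Sum>l\<in>UNIV. of_int 0 *s C l)"
      by (simp only: sel) simp
    then show ?thesis by (rule ssubst) (rule memG)
  qed
  have CG: "C j \<in> period_lattice T R1 R2" for j
  proof -
    have "C j = (\<Sum>j'\<in>UNIV. of_int 0 *s E j') + (\<Sum>l\<in>UNIV. of_int 0 *s B l) + (\<Sum>l\<in>UNIV. of_int (if l = j then 1 else 0) *s C l)"
      by (simp only: sel) simp
    then show ?thesis by (rule ssubst) (rule memG)
  qed
  have xeq: "x = (\<Sum>j\<in>UNIV. complex_of_real (\<alpha>$j) *s E j) + (\<Sum>l\<in>UNIV. complex_of_real (\<beta>$l) *s B l) + (\<Sum>l\<in>UNIV. complex_of_real (\<gamma>$l) *s C l)"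
  proof (subst vec_eq_iff, intro allI)
    fix idx
    show "x $ idx = ((\<Sum>j\<in>UNIV. complex_of_real (\<alpha>$j) *s E j) + (\<Sum>l\<in>UNIV. complex_of_real (\<beta>$l) *s B l) + (\<Sum>l\<in>UNIV. complex_of_real (\<gamma>$l) *s C l)) $ idx"
    proof (cases idx)
      case (Inl p)
      have im: "(\<Sum>l\<in>UNIV. \<gamma>$l * Im (T$p$l)) = Im (x $ Inl p)"
        using arg_cong[OF A\<gamma>, of "\<lambda>v. v $ p"] by (simp add: A_def matrix_vector_mult_def mult.commute)
      show ?thesis unfolding Inl
        by (simp add: E_def B_def C_def \<beta>_def complex_eq_iff Re_sum Im_sum im if_distrib cong: if_cong)
    next
      case (Inr i)
      show ?thesis unfolding Inr using z0
        by (simp add: E_def B_def C_def \<alpha>_def if_distrib sum_distrib_left cong: if_cong)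
    qed
  qed
  show ?thesis unfolding xeq scaleR_cvec[symmetric]
    by (intro span_add span_sum span_scale span_base EG BG CG)
qed

theorem lemma2p2:
  fixes T :: "complex^'m^'m"
    and R1 R2 :: "real^'m^'k"
    and \<Lambda> :: "(complex^'r) set"
  assumes discrete: "discrete_subgroup (period_lattice T R1 R2)"
    and rank: "cspan_vec (period_lattice T R1 R2) = UNIV"
    and imT: "det (\<chi> i j. Im (T$i$j)) \<noteq> 0"
    and not_irr: "\<not> irrationality_condition (block_R R1 R2)"
    and decomp: "quotient_iso (period_lattice T R1 R2) (split_lattice \<Lambda> :: (complex^('q::finite + 'r)) set)"
    and tor: "toroidal \<Lambda>"
    and ab: "abelian_variety (torus_lattice T)"
  shows "quasi_abelian_kind0 \<Lambda>"
proof -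
  let ?G = "period_lattice T R1 R2"
  let ?S = "split_lattice \<Lambda> :: (complex^('q + 'r)) set"
  obtain \<phi> :: "complex^('m+'k) \<Rightarrow> complex^('q+'r)" where
    \<phi>bij: "bij \<phi>" and \<phi>cl: "clinear_vec \<phi>" and \<phi>G: "\<phi> ` ?G = ?S"
    using decomp unfolding quotient_iso_def by blast
  define \<theta> where "\<theta> = inv \<phi>"
  have \<theta>cl: "clinear_vec \<theta>" unfolding \<theta>_def by (rule clinear_inv[OF \<phi>bij \<phi>cl])
  have \<phi>lin: "linear \<phi>" by (rule clinear_linear[OF \<phi>cl])
  have \<theta>lin: "linear \<theta>" by (rule clinear_linear[OF \<theta>cl])
  have \<theta>\<phi>: "\<theta> (\<phi> z) = z" for z unfolding \<theta>_def using \<phi>bij by (simp add: bij_is_inj)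
  have \<phi>\<theta>: "\<phi> (\<theta> w) = w" for w unfolding \<theta>_def using \<phi>bij by (simp add: bij_is_surj surj_f_inv_f)
  have \<theta>S: "\<theta> ` ?S = ?G" unfolding \<phi>G[symmetric] image_image \<theta>\<phi> by simp
  have \<theta>a: "\<theta> (x + y) = \<theta> x + \<theta> y" "\<theta> (c *s x) = c *s \<theta> x" for x y c
    using \<theta>cl unfolding clinear_vec_def by auto
  have \<phi>a: "\<phi> (x + y) = \<phi> x + \<phi> y" "\<phi> (c *s x) = c *s \<phi> x" for x y c
    using \<phi>cl unfolding clinear_vec_def by auto
  have span\<theta>: "\<theta> w \<in> span ?G" if "w \<in> span ?S" for w
    using that span_linear_image[OF \<theta>lin, of ?S] \<theta>S by auto
  have span\<phi>: "\<phi> z \<in> span ?S" if "z \<in> span ?G" for z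
    using that span_linear_image[OF \<phi>lin, of ?G] \<phi>G by auto
  define \<iota> :: "complex^'r \<Rightarrow> complex^('q+'r)" where
    "\<iota> v = (\<chi> idx. case idx of Inl _ \<Rightarrow> 0 | Inr j \<Rightarrow> v$j)" for v
  have \<iota>a: "\<iota> (x + y) = \<iota> x + \<iota> y" "\<iota> (c *s x) = c *s \<iota> x" for x y c
    unfolding \<iota>_def by (auto simp: vec_eq_iff split: sum.splits)
  have \<iota>cl: "clinear_vec \<iota>" unfolding clinear_vec_def using \<iota>a by auto
  have \<iota>lin: "linear \<iota>" by (rule clinear_linear[OF \<iota>cl])
  have \<iota>Inr: "\<iota> v $ Inr j = v $ j" for v j unfolding \<iota>_def by simp
  have \<iota>Inl: "\<iota> v $ Inl j = 0" for v j unfolding \<iota>_def by simp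
  have \<iota>S: "\<iota> a \<in> ?S" if "a \<in> \<Lambda>" for a
  proof -
    have "(\<chi> j. \<iota> a $ Inr j) = a" by (simp add: vec_eq_iff \<iota>Inr)
    moreover have "\<iota> a $ Inl i = 2 * of_real pi * \<i> * of_int 0" for i by (simp add: \<iota>Inl)
    ultimately show ?thesis unfolding split_lattice_def using that by auto
  qed
  have span\<iota>: "\<iota> v \<in> span ?S" if "v \<in> span \<Lambda>" for v
  proof -
    have "\<iota> v \<in> span (\<iota> ` \<Lambda>)" using that span_linear_image[OF \<iota>lin, of \<Lambda>] by auto
    moreover have "span (\<iota> ` \<Lambda>) \<subseteq> span ?S" by (rule span_mono) (use \<iota>S in auto)
    ultimately show ?thesis by auto
  qed
  define p :: "complex^('m+'k) \<Rightarrow> complex^'m" where "p z = (\<chi> l. z $ Inl l)" for z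
  define \<psi> where "\<psi> v = p (\<theta> (\<iota> v))" for v
  have \<psi>a: "\<psi> (x + y) = \<psi> x + \<psi> y" "\<psi> (c *s x) = c *s \<psi> x" for x y c
    unfolding \<psi>_def p_def by (auto simp: vec_eq_iff \<iota>a \<theta>a)
  have \<psi>d: "\<psi> (x - y) = \<psi> x - \<psi> y" for x y
  proof -
    have e1: "x - y = x + (-1) *s y" and e2: "\<psi> x - \<psi> y = \<psi> x + (-1) *s \<psi> y" by (simp_all add: vec_eq_iff)
    show ?thesis by (simp only: e1 e2 \<psi>a)
  qed
  have \<psi>R: "\<psi> (c *\<^sub>R x) = complex_of_real c *s \<psi> x" for c x
    unfolding scaleR_cvec by (rule \<psi>a(2))
  have \<psi>0: "\<psi> 0 = 0" using \<psi>a(2)[of 0 0] by simp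
  obtain HT where HTh: "hermitian_form HT" and HTp: "\<And>v. v \<noteq> 0 \<Longrightarrow> Re (HT v v) > 0"
    and HTi: "\<And>a b. a \<in> torus_lattice T \<Longrightarrow> b \<in> torus_lattice T \<Longrightarrow> Im (HT a b) \<in> \<int>"
    using ab unfolding abelian_variety_def by blast
  note HP = herm_props[OF HTh]
  define H where "H u v = HT (\<psi> u) (\<psi> v)" for u v
  have Hherm: "hermitian_form H"
  proof -
    have sym: "HT a b = cnj (HT b a)" for a b using HTh unfolding hermitian_form_def by blast
    show ?thesis unfolding hermitian_form_def H_def
      by (intro conjI allI) (simp only: \<psi>a HP, simp only: \<psi>a HP, rule sym)
  qed
  have Hint: "Im (H a b) \<in> \<int>" if "a \<in> \<Lambda>" "b \<in> \<Lambda>" for a b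
  proof -
    have "\<theta> (\<iota> a) \<in> ?G" "\<theta> (\<iota> b) \<in> ?G" using \<iota>S that \<theta>S by auto
    then have "\<psi> a \<in> torus_lattice T" "\<psi> b \<in> torus_lattice T"
      unfolding \<psi>_def p_def by (auto intro: Gamma_torus)
    then show ?thesis unfolding H_def by (rule HTi)
  qed
  define M where "M = max_complex_subspace \<Lambda>"
  have Mdef: "M = span \<Lambda> \<inter> (\<lambda>v. \<i> *s v) ` span \<Lambda>" unfolding M_def max_complex_subspace_def ..
  have Hpos: "Re (H v v) > 0" if vM: "v \<in> M" and vnz: "v \<noteq> 0" for v
  proof -
    obtain v' where v: "v \<in> span \<Lambda>" "v' \<in> span \<Lambda>" "v = \<i> *s v'" using vM unfolding Mdef by blast
    define z where "z = \<theta> (\<iota> v)"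
    define z' where "z' = \<theta> (\<iota> v')"
    have zG: "z \<in> span ?G" "z' \<in> span ?G" unfolding z_def z'_def using span\<theta> span\<iota> v by auto
    have zz: "z = \<i> *s z'" unfolding z_def z'_def v(3) \<iota>a \<theta>a ..
    have zInr: "z $ Inr j = 0" for j
    proof -
      have "Im (z $ Inr j) = 0" "Im (z' $ Inr j) = 0" using span_Gamma_real[OF zG(1)] span_Gamma_real[OF zG(2)] by auto
      moreover have "z $ Inr j = \<i> * z' $ Inr j" using zz by simp
      ultimately show ?thesis by (simp add: complex_eq_iff)
    qed
    have "\<psi> v \<noteq> 0"
    proof
      assume "\<psi> v = 0"
      then have "z $ Inl l = 0" for l unfolding \<psi>_def p_def z_def by (simp add: vec_eq_iff)
      then have "z = 0" using zInr by (simp add: vec_eq_iff) (metis sum.exhaust)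
      then have "\<iota> v = 0" using \<phi>\<theta>[of "\<iota> v"] linear_0[OF \<phi>lin] unfolding z_def by simp
      then have "v = 0" using \<iota>Inr by (simp add: vec_eq_iff) (metis zero_index)
      then show False using vnz by simp
    qed
    then show ?thesis unfolding H_def by (rule HTp)
  qed
  define K where "K = {v \<in> span \<Lambda>. \<forall>w\<in>span \<Lambda>. Im (H v w) = 0}"
  have subK: "subspace K"
    unfolding subspace_def K_def
    by (auto simp: H_def \<psi>a \<psi>R \<psi>0 HP span_zero span_add span_scale)
  have subM: "subspace M"
    unfolding Mdef
  proof (rule subspace_inter)
    show "subspace (span \<Lambda>)" by simp
    have "linear (\<lambda>v::complex^'r. \<i> *s v)" by (intro linearI) (auto simp: scaleR_cvec vec_eq_iff algebra_simps)
    then show "subspace ((\<lambda>v. \<i> *s v) ` span \<Lambda>)" by (rule linear_subspace_image) simp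
  qed
  have MK: "K \<inter> M = {0}"
  proof (rule ccontr)
    assume "K \<inter> M \<noteq> {0}"
    moreover have "0 \<in> K \<inter> M" using subK subM subspace_0 by blast
    ultimately obtain v where v: "v \<in> K" "v \<in> M" "v \<noteq> 0" by blast
    obtain v' where v': "v' \<in> span \<Lambda>" "v = \<i> *s v'" using v(2) unfolding Mdef by auto
    have "\<i> *s v = - v'" using v'(2) by (simp add: vec_eq_iff)
    then have iv: "\<i> *s v \<in> span \<Lambda>" using v'(1) span_neg by metis
    have "Im (H v (\<i> *s v)) = 0" using v(1) iv unfolding K_def by blast
    moreover have "Im (H v (\<i> *s v)) = - Re (H v v)" unfolding H_def \<psi>a by (rule HP(6))
    ultimately show False using Hpos[OF v(2,3)] by simp
  qed
  have surjM: "\<exists>u\<in>M. \<psi> u = x" for x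
  proof -
    define z :: "complex^('m+'k)" where "z = (\<chi> idx. case idx of Inl l \<Rightarrow> x $ l | Inr _ \<Rightarrow> 0)"
    have zG: "z \<in> span ?G" "(- \<i>) *s z \<in> span ?G"
      by (rule span_Gamma_full[OF imT]; simp add: z_def)+
    define w where "w = \<phi> z"
    have wS: "w \<in> span ?S" "(- \<i>) *s w \<in> span ?S" proof -
      have "(- \<i>) *s w = \<phi> ((- \<i>) *s z)" unfolding w_def by (simp only: \<phi>a)
      then show "w \<in> span ?S" "(- \<i>) *s w \<in> span ?S" using span\<phi>[OF zG(1)] span\<phi>[OF zG(2)] unfolding w_def by simp_all
    qed
    have wInl: "w $ Inl j = 0" for j
    proof -
      have "Re (w $ Inl j) = 0" "Re (((- \<i>) *s w) $ Inl j) = 0" using span_split wS by blast+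
      then show ?thesis by (simp add: complex_eq_iff)
    qed
    define u where "u = (\<chi> j. w $ Inr j)"
    define u' where "u' = (\<chi> j. ((- \<i>) *s w) $ Inr j)"
    have uS: "u \<in> span \<Lambda>" "u' \<in> span \<Lambda>" unfolding u_def u'_def using span_split wS by blast+
    have "u = \<i> *s u'" unfolding u_def u'_def by (simp add: vec_eq_iff)
    then have uM: "u \<in> M" unfolding Mdef using uS by auto
    have "\<iota> u = w" unfolding \<iota>_def u_def using wInl by (simp add: vec_eq_iff split: sum.splits)
    then have "\<psi> u = p z" unfolding \<psi>_def w_def by (simp add: \<theta>\<phi>)
    also have "\<dots> = x" unfolding p_def z_def by (simp add: vec_eq_iff)
    finally show ?thesis using uM by blast
  qed
  have MsubL: "M \<subseteq> span \<Lambda>" unfolding Mdef by auto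
  have KsubL: "K \<subseteq> span \<Lambda>" unfolding K_def by auto
  have sumeq: "{a + b |a b. a \<in> K \<and> b \<in> M} = span \<Lambda>"
  proof
    show "{a + b |a b. a \<in> K \<and> b \<in> M} \<subseteq> span \<Lambda>" using MsubL KsubL span_add by blast
    show "span \<Lambda> \<subseteq> {a + b |a b. a \<in> K \<and> b \<in> M}"
    proof
      fix v assume v: "v \<in> span \<Lambda>"
      obtain u where u: "u \<in> M" "\<psi> u = \<psi> v" using surjM by metis
      have "v - u \<in> K" unfolding K_def
        using v u MsubL span_diff by (auto simp: H_def \<psi>d HP)
      then show "v \<in> {a + b |a b. a \<in> K \<and> b \<in> M}" using u(1) by (metis (mono_tags, lifting) CollectI diff_add_cancel)
    qed
  qed
  have "dim (span \<Lambda>) + dim (K \<inter> M) = dim K + dim M" using dim_sums_Int[OF subK subM] sumeq by simp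
  moreover have "dim (K \<inter> M) = 0" unfolding MK by (metis dim_empty dim_span span_empty)
  ultimately have rk: "im_rank_on H \<Lambda> = dim M + 2 * 0" unfolding im_rank_on_def K_def[symmetric] by simp
  have "ample_riemann_form_kind H \<Lambda> 0"
    unfolding ample_riemann_form_kind_def M_def[symmetric]
    using Hherm Hpos Hint rk by blast
  then show ?thesis unfolding quasi_abelian_kind0_def by blast
qed

end
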